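(* Let $p$ be a complex polynomial and $c\in\mathbb C\setminus\{0\}$. (i) If there exists $\alpha\in\mathbb C$ with $|\alpha|<1$, $\alpha p'(\alpha)+cp(\alpha)=0$ and $|p(\alpha)-1|<1$, then $\mathrm D(p,c)\neq\{0\}$ and $\big[N,-\frac ic\log p(L)\big]=-i\mathbf 1$ on $\mathrm D(p,c)$. (ii) If $p$ is not of the form $p(x)=bx^m$ with $b\in\mathbb C$, $m\in\mathbb N$, then any subspace $\mathcal D\subset \mathcal E\cap\mathrm D(N\log p(L))\cap\mathrm D(\log p(L)N)$ such that $[N,\log p(L)]\varphi=c\varphi$ for all $\varphi\in\mathcal D$ is finite-dimensional, where $\mathcal E$ is the set of $\varphi\in\ell^2$ for which $\sum_{k=1}^\infty\frac1kN(\mathbf1-p(L))^k\varphi$ converges.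
   Context: $\ell^2=\ell^2(\mathbb N)$, $\mathbb N=\{0,1,\dots\}$, basis $(\xi_n)$; $N\xi_n=n\xi_n$ (self-adjoint, maximal domain); $L$ is the left shift $L\xi_n=\xi_{n-1}$, $L\xi_0=0$; $p(L)$ is the bounded operator obtained by substituting $L$ into $p$. For a linear operator $A$, $\mathrm D(\log A)=\{f\in\bigcap_{k\ge0}\mathrm D(A^k):\lim_K\sum_{k=1}^K\frac1k(\mathbf1-A)^kf\text{ exists}\}$, $\log Af=-\sum_{k\ge1}\frac1k(\mathbf1-A)^kf$. $\mathrm D(p,c)$ is the linear hull of all $\varphi\in\mathrm D(N)$ for which there is $\alpha\in\mathbb C$ with $|p(\alpha)-1|<1$, $\alpha p'(\alpha)+cp(\alpha)=0$ and $\varphi\in\ker(L-\alpha\mathbf1)$. Commutators $[A,B]=AB-BA$ on $\mathrm D(AB)\cap\mathrm D(BA)$; "$[A,B]=C$ on $\mathcal D$" means $\mathcal D\subset \mathrm D(AB)\cap\mathrm D(BA)$ and $(AB-BA)\varphi=C\varphi$ on $\mathcal D$. *)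

theory Defs
  imports "HOL-Analysis.Analysis" "HOL-Computational_Algebra.Polynomial"
begin

text \<open>Sequences indexed by the basis xi_n; l2 is the Hilbert space ell^2(N).\<close>
type_synonym seq = "nat \<Rightarrow> complex"

definition l2 :: "seq set" where
  "l2 = {f. summable (\<lambda>n. (cmod (f n))\<^sup>2)}"

definition l2norm :: "seq \<Rightarrow> real" where
  "l2norm f = sqrt (\<Sum>n. (cmod (f n))\<^sup>2)"

definition l2_conv :: "(nat \<Rightarrow> seq) \<Rightarrow> seq \<Rightarrow> bool" where
  "l2_conv g x \<longleftrightarrow> x \<in> l2 \<and> (\<forall>K. g K \<in> l2) \<and>
      (\<lambda>K. l2norm (\<lambda>n. g K n - x n)) \<longlonglongrightarrow> 0"

text \<open>A (possibly unbounded) linear operator: (domain, action).\<close>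
type_synonym op = "seq set \<times> (seq \<Rightarrow> seq)"

definition dom :: "op \<Rightarrow> seq set" where "dom A = fst A"
definition app :: "op \<Rightarrow> seq \<Rightarrow> seq" where "app A = snd A"

definition idop :: op where "idop = (l2, \<lambda>f. f)"

definition comp :: "op \<Rightarrow> op \<Rightarrow> op" where
  "comp A B = ({f \<in> dom B. app B f \<in> dom A}, \<lambda>f. app A (app B f))"

fun opow :: "op \<Rightarrow> nat \<Rightarrow> op" where
  "opow A 0 = idop"
| "opow A (Suc k) = comp A (opow A k)"

definition one_minus :: "op \<Rightarrow> op" where
  "one_minus A = (dom A \<inter> l2, \<lambda>f n. f n - app A f n)"

definition scale_op :: "complex \<Rightarrow> op \<Rightarrow> op" where
  "scale_op a A = (dom A, \<lambda>f n. a * app A f n)"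

definition log_psum :: "op \<Rightarrow> seq \<Rightarrow> nat \<Rightarrow> seq" where
  "log_psum A f K = (\<lambda>n. \<Sum>k=1..K. (1 / of_nat k) * app (opow (one_minus A) k) f n)"

definition log_op :: "op \<Rightarrow> op" where
  "log_op A = ({f \<in> (\<Inter>k. dom (opow A k)). \<exists>x. l2_conv (log_psum A f) x},
              \<lambda>f n. - (THE x. l2_conv (log_psum A f) x) n)"

definition N_op :: op where
  "N_op = ({f \<in> l2. (\<lambda>n. of_nat n * f n) \<in> l2}, \<lambda>f n. of_nat n * f n)"

definition L_op :: op where
  "L_op = (l2, \<lambda>f n. f (Suc n))"

definition polyL :: "complex poly \<Rightarrow> op" where
  "polyL p = (l2, \<lambda>f n. \<Sum>k\<le>degree p. coeff p k * f (n + k))"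

definition comm_on :: "op \<Rightarrow> op \<Rightarrow> (seq \<Rightarrow> seq) \<Rightarrow> seq set \<Rightarrow> bool" where
  "comm_on A B C D \<longleftrightarrow> D \<subseteq> dom (comp A B) \<inter> dom (comp B A) \<and>
     (\<forall>\<phi>\<in>D. (\<lambda>n. app (comp A B) \<phi> n - app (comp B A) \<phi> n) = C \<phi>)"

definition clinhull :: "seq set \<Rightarrow> seq set" where
  "clinhull S = {f. \<exists>m (a::nat \<Rightarrow> complex) v. (\<forall>i<m. v i \<in> S) \<and>
                      f = (\<lambda>n. \<Sum>i<m. a i * v i n)}"

definition csubspace_seq :: "seq set \<Rightarrow> bool" where
  "csubspace_seq D \<longleftrightarrow> (\<lambda>n. 0) \<in> D \<and> (\<forall>f\<in>D. \<forall>g\<in>D. (\<lambda>n. f n + g n) \<in> D) \<and>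
     (\<forall>a. \<forall>f\<in>D. (\<lambda>n. a * f n) \<in> D)"

definition findim_seq :: "seq set \<Rightarrow> bool" where
  "findim_seq D \<longleftrightarrow> (\<exists>B. finite B \<and> D \<subseteq> clinhull B)"

definition kerL :: "complex \<Rightarrow> seq set" where
  "kerL \<alpha> = {f \<in> dom L_op. (\<lambda>n. app L_op f n - \<alpha> * f n) = (\<lambda>n. 0)}"

definition Dpc :: "complex poly \<Rightarrow> complex \<Rightarrow> seq set" where
  "Dpc p c = clinhull {\<phi> \<in> dom N_op. \<exists>\<alpha>. cmod (poly p \<alpha> - 1) < 1 \<and>
       \<alpha> * poly (pderiv p) \<alpha> + c * poly p \<alpha> = 0 \<and> \<phi> \<in> kerL \<alpha>}"

definition Eset :: "complex poly \<Rightarrow> seq set" where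
  "Eset p = {\<phi> \<in> l2. (\<forall>k\<ge>1. \<phi> \<in> dom (comp N_op (opow (one_minus (polyL p)) k))) \<and>
     (\<exists>x. l2_conv (\<lambda>K n. \<Sum>k=1..K. (1 / of_nat k) *
            app (comp N_op (opow (one_minus (polyL p)) k)) \<phi> n) x)}"

end

theory Submission
  imports Defs
begin

definition ss :: "seq \<Rightarrow> real" where "ss f = (\<Sum>n. (cmod (f n))\<^sup>2)"

lemma sq_ineq: "(cmod (a + b))\<^sup>2 \<le> 2 * (cmod a)\<^sup>2 + 2 * (cmod b)\<^sup>2"
proof -
  have "cmod (a+b) \<le> cmod a + cmod b" by (rule norm_triangle_ineq)
  hence "(cmod (a + b))\<^sup>2 \<le> (cmod a + cmod b)\<^sup>2" by (simp add: power_mono)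
  also have "\<dots> \<le> 2 * (cmod a)\<^sup>2 + 2 * (cmod b)\<^sup>2"
    using zero_le_power2[of "cmod a - cmod b"] by (simp add: power2_eq_square algebra_simps)
  finally show ?thesis .
qed

lemma l2_lin: "f \<in> l2 \<Longrightarrow> g \<in> l2 \<Longrightarrow> (\<lambda>n. a * f n + g n) \<in> l2"
proof -
  assume f: "f \<in> l2" and g: "g \<in> l2"
  have "summable (\<lambda>n. 2 * (cmod a)\<^sup>2 * (cmod (f n))\<^sup>2 + 2 * (cmod (g n))\<^sup>2)"
    using f g unfolding l2_def by (intro summable_add[OF summable_mult summable_mult]) auto
  moreover have "norm ((cmod (a * f n + g n))\<^sup>2) \<le> 2 * (cmod a)\<^sup>2 * (cmod (f n))\<^sup>2 + 2 * (cmod (g n))\<^sup>2" for n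
    using sq_ineq[of "a * f n" "g n"] by (simp add: norm_mult power_mult_distrib)
  ultimately have "summable (\<lambda>n. (cmod (a * f n + g n))\<^sup>2)"
    by (rule summable_comparison_test'[where N=0])
  thus ?thesis unfolding l2_def by simp
qed

lemma ss_lin: "f \<in> l2 \<Longrightarrow> g \<in> l2 \<Longrightarrow> ss (\<lambda>n. a * f n + g n) \<le> 2 * (cmod a)\<^sup>2 * ss f + 2 * ss g"
proof -
  assume f: "f \<in> l2" and g: "g \<in> l2"
  have s1: "summable (\<lambda>n. 2 * (cmod a)\<^sup>2 * (cmod (f n))\<^sup>2 + 2 * (cmod (g n))\<^sup>2)"
    using f g unfolding l2_def by (intro summable_add[OF summable_mult summable_mult]) auto
  have "ss (\<lambda>n. a * f n + g n) \<le> (\<Sum>n. 2 * (cmod a)\<^sup>2 * (cmod (f n))\<^sup>2 + 2 * (cmod (g n))\<^sup>2)"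
    unfolding ss_def
    apply (rule suminf_le)
    using sq_ineq[of "a * f n" "g n" for n] l2_lin[OF f g, of a] s1
    by (auto simp: norm_mult power_mult_distrib l2_def mult.assoc)
  also have "\<dots> = 2 * (cmod a)\<^sup>2 * ss f + 2 * ss g"
    using f g unfolding l2_def ss_def
    by (subst suminf_add[symmetric]) (auto intro: summable_mult simp: suminf_mult)
  finally show ?thesis .
qed

lemma ss_nonneg: "f \<in> l2 \<Longrightarrow> ss f \<ge> 0"
  unfolding ss_def l2_def by (auto intro: suminf_nonneg)

lemma l2_zero: "(\<lambda>n. 0) \<in> l2" unfolding l2_def by simp

lemma l2_scale: "f \<in> l2 \<Longrightarrow> (\<lambda>n. a * f n) \<in> l2"
  using l2_lin[OF _ l2_zero, of f a] by simp

lemma l2_add: "f \<in> l2 \<Longrightarrow> g \<in> l2 \<Longrightarrow> (\<lambda>n. f n + g n) \<in> l2"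
  using l2_lin[of f g 1] by simp

lemma l2_diff: "f \<in> l2 \<Longrightarrow> g \<in> l2 \<Longrightarrow> (\<lambda>n. f n - g n) \<in> l2"
  using l2_lin[of g f "-1"] by simp

lemma sqrt_tendsto0: "(\<And>K. h K \<ge> 0) \<Longrightarrow> ((\<lambda>K. sqrt (h K)) \<longlonglongrightarrow> 0) \<longleftrightarrow> (h \<longlonglongrightarrow> (0::real))"
proof
  assume "(\<lambda>K. sqrt (h K)) \<longlonglongrightarrow> 0" and "\<And>K. h K \<ge> 0"
  then have "(\<lambda>K. (sqrt (h K))^2) \<longlonglongrightarrow> 0^2" by (intro tendsto_power)
  then show "h \<longlonglongrightarrow> 0" using \<open>\<And>K. h K \<ge> 0\<close> by simp
next
  assume "h \<longlonglongrightarrow> 0"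
  then show "(\<lambda>K. sqrt (h K)) \<longlonglongrightarrow> 0" using tendsto_real_sqrt by fastforce
qed

lemma l2_conv_iff: "l2_conv g x \<longleftrightarrow> x \<in> l2 \<and> (\<forall>K. g K \<in> l2) \<and> ((\<lambda>K. ss (\<lambda>n. g K n - x n)) \<longlonglongrightarrow> 0)"
proof -
  have "(\<forall>K. g K \<in> l2) \<Longrightarrow> x \<in> l2 \<Longrightarrow> ((\<lambda>K. sqrt (ss (\<lambda>n. g K n - x n))) \<longlonglongrightarrow> 0) \<longleftrightarrow> ((\<lambda>K. ss (\<lambda>n. g K n - x n)) \<longlonglongrightarrow> 0)"
    by (rule sqrt_tendsto0) (auto intro: ss_nonneg l2_diff)
  thus ?thesis unfolding l2_conv_def l2norm_def ss_def[symmetric] by auto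
qed

lemma l2_conv_lin:
  assumes "l2_conv g x" "l2_conv h y"
  shows "l2_conv (\<lambda>K n. a * g K n + h K n) (\<lambda>n. a * x n + y n)"
proof -
  have x: "x \<in> l2" and g: "\<And>K. g K \<in> l2" and t1: "(\<lambda>K. ss (\<lambda>n. g K n - x n)) \<longlonglongrightarrow> 0"
    using assms(1) unfolding l2_conv_iff by auto
  have y: "y \<in> l2" and h: "\<And>K. h K \<in> l2" and t2: "(\<lambda>K. ss (\<lambda>n. h K n - y n)) \<longlonglongrightarrow> 0"
    using assms(2) unfolding l2_conv_iff by auto
  have e: "(\<lambda>n. a * g K n + h K n - (a * x n + y n)) = (\<lambda>n. a * (g K n - x n) + (h K n - y n))" for K
    by (auto simp: algebra_simps)
  have b: "ss (\<lambda>n. a * g K n + h K n - (a * x n + y n)) \<le> 2 * (cmod a)\<^sup>2 * ss (\<lambda>n. g K n - x n) + 2 * ss (\<lambda>n. h K n - y n)" for K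
    unfolding e by (rule ss_lin) (use l2_diff g h x y in auto)
  have "(\<lambda>K. 2 * (cmod a)\<^sup>2 * ss (\<lambda>n. g K n - x n) + 2 * ss (\<lambda>n. h K n - y n)) \<longlonglongrightarrow> 2 * (cmod a)\<^sup>2 * 0 + 2 * 0"
    by (intro tendsto_intros t1 t2)
  hence up: "(\<lambda>K. 2 * (cmod a)\<^sup>2 * ss (\<lambda>n. g K n - x n) + 2 * ss (\<lambda>n. h K n - y n)) \<longlonglongrightarrow> 0" by simp
  have lo: "0 \<le> ss (\<lambda>n. a * g K n + h K n - (a * x n + y n))" for K
    by (rule ss_nonneg) (intro l2_diff l2_lin g h x y)
  have "(\<lambda>K. ss (\<lambda>n. a * g K n + h K n - (a * x n + y n))) \<longlonglongrightarrow> 0"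
    by (rule tendsto_sandwich[OF _ _ tendsto_const up]) (use lo b in auto)
  moreover have "\<forall>K. (\<lambda>n. a * g K n + h K n) \<in> l2" using l2_lin g h by blast
  moreover have "(\<lambda>n. a * x n + y n) \<in> l2" using l2_lin x y by blast
  ultimately show ?thesis unfolding l2_conv_iff by blast
qed

lemma ss_scale: "f \<in> l2 \<Longrightarrow> ss (\<lambda>n. a * f n) = (cmod a)\<^sup>2 * ss f"
  unfolding ss_def l2_def by (simp add: norm_mult power_mult_distrib suminf_mult)

lemma l2_conv_scal:
  assumes f: "f \<in> l2" and s: "s \<longlonglongrightarrow> L"
  shows "l2_conv (\<lambda>K n. s K * f n) (\<lambda>n. L * f n)"
proof -
  have e: "(\<lambda>n. s K * f n - L * f n) = (\<lambda>n. (s K - L) * f n)" for K by (auto simp: algebra_simps)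
  have "(\<lambda>K. s K - L) \<longlonglongrightarrow> 0" using s by (simp add: LIM_zero)
  hence "(\<lambda>K. (cmod (s K - L))\<^sup>2 * ss f) \<longlonglongrightarrow> 0^2 * ss f"
    by (intro tendsto_intros) (simp add: tendsto_norm_zero)
  hence "(\<lambda>K. ss (\<lambda>n. (s K - L) * f n)) \<longlonglongrightarrow> 0" unfolding ss_scale[OF f] by simp
  moreover have "\<forall>K. (\<lambda>n. s K * f n) \<in> l2" using l2_scale[OF f] by blast
  ultimately show ?thesis unfolding l2_conv_iff e using l2_scale[OF f] by blast
qed

lemma l2_conv_pointwise:
  assumes "l2_conv g x" shows "(\<lambda>K. g K n) \<longlonglongrightarrow> x n"
proof -
  have x: "x \<in> l2" and g: "\<And>K. g K \<in> l2" and t: "(\<lambda>K. ss (\<lambda>n. g K n - x n)) \<longlonglongrightarrow> 0"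
    using assms unfolding l2_conv_iff by auto
  have b: "(cmod (g K n - x n))\<^sup>2 \<le> ss (\<lambda>n. g K n - x n)" for K
  proof -
    have "summable (\<lambda>m. (cmod (g K m - x m))\<^sup>2)" using l2_diff[OF g[of K] x] unfolding l2_def by simp
    from sum_le_suminf[OF this, of "{n}"] show ?thesis unfolding ss_def by auto
  qed
  have "(\<lambda>K. (cmod (g K n - x n))\<^sup>2) \<longlonglongrightarrow> 0"
    by (rule tendsto_sandwich[of "\<lambda>_. 0" _ _ "\<lambda>K. ss (\<lambda>n. g K n - x n)"]) (use b t in auto)
  hence "(\<lambda>K. cmod (g K n - x n)) \<longlonglongrightarrow> 0"
    using sqrt_tendsto0[of "\<lambda>K. (cmod (g K n - x n))\<^sup>2"] by simp
  thus ?thesis by (simp add: tendsto_norm_zero_iff LIM_zero_iff)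
qed

lemma l2_conv_THE: "l2_conv g x \<Longrightarrow> (THE x. l2_conv g x) = x"
proof (rule the_equality)
  fix y assume "l2_conv g x" "l2_conv g y"
  show "y = x"
  proof
    fix n show "y n = x n"
      using l2_conv_pointwise[OF \<open>l2_conv g x\<close>, of n] l2_conv_pointwise[OF \<open>l2_conv g y\<close>, of n]
      by (rule LIMSEQ_unique[rotated])
  qed
qed

definition sp :: "(nat \<Rightarrow> complex) \<Rightarrow> nat \<Rightarrow> seq \<Rightarrow> seq" where
  "sp a D f = (\<lambda>n. \<Sum>j\<le>D. a j * f (n+j))"
definition Tf :: "complex poly \<Rightarrow> seq \<Rightarrow> seq" where
  "Tf p f = (\<lambda>n. f n - sp (coeff p) (degree p) f n)"
definition Mf :: "complex poly \<Rightarrow> seq \<Rightarrow> seq" where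
  "Mf p = sp (\<lambda>j. of_nat j * coeff p j) (degree p)"
definition Nf :: "seq \<Rightarrow> seq" where
  "Nf f = (\<lambda>n. of_nat n * f n)"

lemma app_polyL: "app (polyL p) = sp (coeff p) (degree p)"
  unfolding app_def polyL_def sp_def by auto
lemma dom_polyL: "dom (polyL p) = l2" unfolding dom_def polyL_def by simp
lemma app_one_minus: "app (one_minus A) = (\<lambda>f n. f n - app A f n)"
  unfolding app_def one_minus_def by auto
lemma dom_one_minus: "dom (one_minus A) = dom A \<inter> l2" unfolding dom_def one_minus_def by auto
lemma app_one_minus_polyL: "app (one_minus (polyL p)) = Tf p"
  unfolding app_one_minus app_polyL Tf_def by auto
lemma app_N: "app N_op = Nf" unfolding app_def N_op_def Nf_def by auto
lemma dom_N: "dom N_op = {f \<in> l2. Nf f \<in> l2}" unfolding dom_def N_op_def Nf_def by auto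
lemma app_comp: "app (comp A B) f = app A (app B f)" unfolding app_def comp_def by auto
lemma dom_comp: "dom (comp A B) = {f \<in> dom B. app B f \<in> dom A}" unfolding dom_def comp_def by auto
lemma app_idop: "app idop f = f" unfolding app_def idop_def by auto
lemma dom_idop: "dom idop = l2" unfolding dom_def idop_def by auto
lemma app_opow: "app (opow B k) f = (app B ^^ k) f"
  by (induction k) (auto simp: app_idop app_comp)
lemma app_scale: "app (scale_op a A) f = (\<lambda>n. a * app A f n)" unfolding app_def scale_op_def by auto
lemma dom_scale: "dom (scale_op a A) = dom A" unfolding dom_def scale_op_def by auto

lemma dom_opow:
  assumes "dom B = l2" "\<And>f. f \<in> l2 \<Longrightarrow> app B f \<in> l2"
  shows "dom (opow B k) = l2 \<and> (\<forall>f\<in>l2. app (opow B k) f \<in> l2)"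
  by (induction k) (use assms in \<open>auto simp: dom_idop app_idop dom_comp app_comp\<close>)

lemma l2_shift: "f \<in> l2 \<Longrightarrow> (\<lambda>n. f (n+j)) \<in> l2"
  unfolding l2_def using summable_iff_shift[of "\<lambda>n. (cmod (f n))\<^sup>2" j] by simp

lemma sp_l2: "f \<in> l2 \<Longrightarrow> sp a D f \<in> l2"
proof (induction D)
  case 0 thus ?case unfolding sp_def using l2_scale[OF l2_shift[OF 0, of 0], of "a 0"] by simp
next
  case (Suc D)
  have "sp a (Suc D) f = (\<lambda>n. a (Suc D) * f (n + Suc D) + sp a D f n)"
    unfolding sp_def by (auto simp: add.commute)
  moreover have "(\<lambda>n. a (Suc D) * f (n + Suc D) + sp a D f n) \<in> l2"
    by (rule l2_lin[OF l2_shift[OF Suc.prems] Suc.IH[OF Suc.prems]])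
  ultimately show ?case by simp
qed

lemma sp_lin: "sp a D (\<lambda>n. x * f n + g n) = (\<lambda>n. x * sp a D f n + sp a D g n)"
  unfolding sp_def by (auto simp: algebra_simps sum.distrib sum_distrib_left)

lemma sp_diff: "sp a D (\<lambda>n. f n - g n) = (\<lambda>n. sp a D f n - sp a D g n)"
  unfolding sp_def by (auto simp: algebra_simps sum_subtractf)

lemma sp_comm: "sp a D (sp b E f) = sp b E (sp a D f)"
  unfolding sp_def
  by (auto simp: sum_distrib_left sum.swap[of _ "{..D}"] ac_simps intro!: ext)

lemma Tf_l2: "f \<in> l2 \<Longrightarrow> Tf p f \<in> l2"
  unfolding Tf_def by (intro l2_diff sp_l2)

lemma Tf_lin: "Tf p (\<lambda>n. x * f n + g n) = (\<lambda>n. x * Tf p f n + Tf p g n)"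
  unfolding Tf_def sp_lin by (auto simp: algebra_simps)

lemma Tf_pow_lin: "(Tf p ^^ k) (\<lambda>n. x * f n + g n) = (\<lambda>n. x * (Tf p ^^ k) f n + (Tf p ^^ k) g n)"
  by (induction k) (auto simp: Tf_lin)

lemma Tf_pow_zero: "(Tf p ^^ k) (\<lambda>n. 0) = (\<lambda>n. 0)"
  by (induction k) (auto simp: Tf_def sp_def)

lemma Mf_lin: "Mf p (\<lambda>n. x * f n + g n) = (\<lambda>n. x * Mf p f n + Mf p g n)"
  unfolding Mf_def by (rule sp_lin)

lemma Mf_Tf: "Mf p (Tf p f) = Tf p (Mf p f)"
  unfolding Tf_def Mf_def sp_diff sp_comm ..

lemma Mf_Tf_pow: "Mf p ((Tf p ^^ k) f) = (Tf p ^^ k) (Mf p f)"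
  by (induction k) (auto simp: Mf_Tf)

lemma comm_base: "Nf (Tf p f) = (\<lambda>n. Tf p (Nf f) n + Mf p f n)"
  unfolding Nf_def Tf_def Mf_def sp_def
  by (auto simp: algebra_simps sum_distrib_left sum_subtractf[symmetric] sum.distrib intro!: ext sum.cong)

lemma comm_pow: "Nf ((Tf p ^^ Suc k) f) = (\<lambda>n. (Tf p ^^ Suc k) (Nf f) n + of_nat (Suc k) * (Tf p ^^ k) (Mf p f) n)"
proof (induction k)
  case 0 thus ?case using comm_base by simp
next
  case (Suc k)
  have "Nf ((Tf p ^^ Suc (Suc k)) f) = Nf (Tf p ((Tf p ^^ Suc k) f))" by simp
  also have "\<dots> = (\<lambda>n. Tf p (Nf ((Tf p ^^ Suc k) f)) n + Mf p ((Tf p ^^ Suc k) f) n)" by (rule comm_base)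
  also have "Nf ((Tf p ^^ Suc k) f) = (\<lambda>n. of_nat (Suc k) * (Tf p ^^ k) (Mf p f) n + (Tf p ^^ Suc k) (Nf f) n)"
    using Suc.IH by (auto simp: add.commute)
  also have "Tf p \<dots> = (\<lambda>n. of_nat (Suc k) * (Tf p ^^ Suc k) (Mf p f) n + (Tf p ^^ Suc (Suc k)) (Nf f) n)"
    by (simp add: Tf_lin)
  finally show ?case by (simp add: Mf_Tf Mf_Tf_pow algebra_simps)
qed

lemma log_psum_eq: "log_psum (polyL p) f K = (\<lambda>n. \<Sum>k=1..K. 1 / of_nat k * (Tf p ^^ k) f n)"
  unfolding log_psum_def app_opow app_one_minus_polyL ..

lemma sum_1K: "(\<Sum>k=1..K. g k) = (\<Sum>k<K. g (Suc k))"
  using sum.atLeast1_atMost_eq[of g K] by (simp add: One_nat_def)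

lemma comm_psum:
  "of_nat n * log_psum (polyL p) f K n - log_psum (polyL p) (Nf f) K n = (\<Sum>k<K. (Tf p ^^ k) (Mf p f) n)"
proof -
  have "of_nat n * log_psum (polyL p) f K n - log_psum (polyL p) (Nf f) K n
      = (\<Sum>k=1..K. 1 / of_nat k * (of_nat n * (Tf p ^^ k) f n - (Tf p ^^ k) (Nf f) n))"
    unfolding log_psum_eq by (simp add: sum_distrib_left sum_subtractf algebra_simps)
  also have "\<dots> = (\<Sum>k<K. 1 / of_nat (Suc k) * (of_nat n * (Tf p ^^ Suc k) f n - (Tf p ^^ Suc k) (Nf f) n))"
    by (rule sum_1K)
  also have "\<dots> = (\<Sum>k<K. (Tf p ^^ k) (Mf p f) n)"
  proof (rule sum.cong)
    fix k
    have "of_nat n * (Tf p ^^ Suc k) f n = Nf ((Tf p ^^ Suc k) f) n" unfolding Nf_def ..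
    also have "\<dots> = (Tf p ^^ Suc k) (Nf f) n + of_nat (Suc k) * (Tf p ^^ k) (Mf p f) n"
      unfolding comm_pow ..
    finally show "1 / of_nat (Suc k) * (of_nat n * (Tf p ^^ Suc k) f n - (Tf p ^^ Suc k) (Nf f) n) = (Tf p ^^ k) (Mf p f) n"
      by (simp del: of_nat_Suc)
  qed simp
  finally show ?thesis .
qed

lemma sp_R: "sp (coeff p) (degree p) (\<lambda>n. \<Sum>k<K. (Tf p ^^ k) u n) = (\<lambda>n. u n - (Tf p ^^ K) u n)"
proof (induction K)
  case 0 thus ?case by (simp add: sp_def)
next
  case (Suc K)
  have "(\<lambda>n. \<Sum>k<Suc K. (Tf p ^^ k) u n) = (\<lambda>n. 1 * (Tf p ^^ K) u n + (\<Sum>k<K. (Tf p ^^ k) u n))" by (simp add: add.commute)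
  hence "sp (coeff p) (degree p) (\<lambda>n. \<Sum>k<Suc K. (Tf p ^^ k) u n)
     = (\<lambda>n. sp (coeff p) (degree p) ((Tf p ^^ K) u) n + (u n - (Tf p ^^ K) u n))"
    by (simp only: sp_lin Suc.IH) simp
  also have "\<dots> = (\<lambda>n. u n - (Tf p ^^ Suc K) u n)" by (simp add: Tf_def algebra_simps)
  finally show ?case .
qed

lemma sp_sum: "sp a D (\<lambda>n. \<Sum>k\<in>I. c k * g k n) = (\<lambda>n. \<Sum>k\<in>I. c k * sp a D (g k) n)"
  unfolding sp_def by (auto simp: sum_distrib_left sum.swap[of _ I] ac_simps intro!: ext)

lemma harm:
  fixes u :: "nat \<Rightarrow> complex"
  assumes u: "u \<longlonglongrightarrow> z" and cv: "convergent (\<lambda>K. \<Sum>k=1..K. 1 / of_nat k * u k)"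
  shows "z = 0"
proof (rule ccontr)
  assume z: "z \<noteq> 0"
  have "convergent (\<lambda>K. \<Sum>k<K. 1 / of_nat (Suc k) * u (Suc k))"
    using cv by (simp only: sum_1K)
  hence "summable (\<lambda>k. 1 / of_nat (Suc k) * u (Suc k))" by (simp add: summable_iff_convergent)
  hence "summable (\<lambda>k. cnj z * (1 / of_nat (Suc k) * u (Suc k)))" by (rule summable_mult)
  hence s: "summable (\<lambda>k. Re (cnj z * (1 / of_nat (Suc k) * u (Suc k))))" by (rule summable_Re)
  have "(\<lambda>k. u (Suc k)) \<longlonglongrightarrow> z" using u by (rule LIMSEQ_Suc)
  hence "(\<lambda>k. Re (cnj z * u (Suc k))) \<longlonglongrightarrow> Re (cnj z * z)" by (intro tendsto_intros)
  moreover have "Re (cnj z * z) = (cmod z)\<^sup>2" using cmod_power2[of z] by (simp add: power2_eq_square)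
  moreover have "(cmod z)\<^sup>2 > 0" using z by simp
  ultimately have "eventually (\<lambda>k. Re (cnj z * u (Suc k)) > (cmod z)\<^sup>2 / 2) sequentially"
    by (intro order_tendstoD) auto
  then obtain N where N: "\<And>k. k \<ge> N \<Longrightarrow> Re (cnj z * u (Suc k)) > (cmod z)\<^sup>2 / 2"
    by (auto simp: eventually_at_top_linorder)
  have "summable (\<lambda>k. (cmod z)\<^sup>2 / 2 * (1 / real (Suc k)))"
  proof (rule summable_comparison_test'[OF s, of N])
    fix k assume "k \<ge> N"
    have "Re (cnj z * (1 / of_nat (Suc k) * u (Suc k))) = Re (cnj z * u (Suc k)) / real (Suc k)"
      by (simp add: Re_divide_of_nat)
    moreover have "(cmod z)\<^sup>2 / 2 * (1 / real (Suc k)) \<le> Re (cnj z * u (Suc k)) * (1 / real (Suc k))"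
      by (rule mult_right_mono) (use N[OF \<open>k \<ge> N\<close>] in auto)
    moreover have "norm ((cmod z)\<^sup>2 / 2 * (1 / real (Suc k))) = (cmod z)\<^sup>2 / 2 * (1 / real (Suc k))"
      by simp
    ultimately show "norm ((cmod z)\<^sup>2 / 2 * (1 / real (Suc k))) \<le> Re (cnj z * (1 / of_nat (Suc k) * u (Suc k)))"
      by simp
  qed
  hence "summable (\<lambda>k. (2 / (cmod z)\<^sup>2) * ((cmod z)\<^sup>2 / 2 * (1 / real (Suc k))))" by (rule summable_mult)
  moreover have "(\<lambda>k. (2 / (cmod z)\<^sup>2) * ((cmod z)\<^sup>2 / 2 * (1 / real (Suc k)))) = (\<lambda>k. inverse (real (Suc k)))"
    using z by (auto simp: field_simps)
  ultimately have "summable (\<lambda>k. inverse (real (Suc k)))" by simp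
  hence "summable (\<lambda>k. inverse (real k))" using summable_Suc_iff[of "\<lambda>k. inverse (real k)"] by simp
  thus False using not_summable_harmonic by blast
qed

lemma rel_kernel:
  assumes x: "l2_conv (log_psum (polyL p) \<phi>) x" and y: "l2_conv (log_psum (polyL p) (Nf \<phi>)) y"
    and rel: "\<And>n. of_nat n * x n - y n = - c * \<phi> n"
  shows "(\<Sum>j\<le>degree p. (of_nat j + c) * coeff p j * \<phi> (n+j)) = 0"
proof -
  define u where "u = Mf p \<phi>"
  have R: "(\<lambda>K. \<Sum>k<K. (Tf p ^^ k) u m) \<longlonglongrightarrow> - c * \<phi> m" for m
  proof -
    have "(\<lambda>K. of_nat m * log_psum (polyL p) \<phi> K m - log_psum (polyL p) (Nf \<phi>) K m) \<longlonglongrightarrow> of_nat m * x m - y m"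
      by (intro tendsto_intros l2_conv_pointwise x y)
    thus ?thesis unfolding comm_psum rel u_def .
  qed
  have "(\<lambda>K. sp (coeff p) (degree p) (\<lambda>m. \<Sum>k<K. (Tf p ^^ k) u m) n) \<longlonglongrightarrow> (\<Sum>j\<le>degree p. coeff p j * (- c * \<phi> (n+j)))"
    unfolding sp_def by (intro tendsto_intros R)
  hence "(\<lambda>K. u n - (Tf p ^^ K) u n) \<longlonglongrightarrow> (\<Sum>j\<le>degree p. coeff p j * (- c * \<phi> (n+j)))"
    unfolding sp_R .
  hence "(\<lambda>K. u n - (u n - (Tf p ^^ K) u n)) \<longlonglongrightarrow> u n - (\<Sum>j\<le>degree p. coeff p j * (- c * \<phi> (n+j)))"
    by (intro tendsto_intros)
  hence T: "(\<lambda>K. (Tf p ^^ K) u n) \<longlonglongrightarrow> u n - (\<Sum>j\<le>degree p. coeff p j * (- c * \<phi> (n+j)))" by simp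
  have "(\<lambda>K. Mf p (log_psum (polyL p) \<phi> K) n) \<longlonglongrightarrow> Mf p x n"
    unfolding Mf_def sp_def by (intro tendsto_intros l2_conv_pointwise x)
  moreover have "Mf p (log_psum (polyL p) \<phi> K) n = (\<Sum>k=1..K. 1 / of_nat k * (Tf p ^^ k) u n)" for K
    unfolding log_psum_eq Mf_def sp_sum by (simp add: Mf_def[symmetric] Mf_Tf_pow u_def)
  ultimately have "convergent (\<lambda>K. \<Sum>k=1..K. 1 / of_nat k * (Tf p ^^ k) u n)"
    by (auto simp: convergent_def)
  from harm[OF T this] have "u n + c * (\<Sum>j\<le>degree p. coeff p j * \<phi> (n+j)) = 0"
    by (simp add: sum_distrib_left algebra_simps sum_negf)
  thus ?thesis unfolding u_def Mf_def sp_def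
    by (simp add: sum_distrib_left algebra_simps sum.distrib)
qed

function rsol :: "(nat \<Rightarrow> complex) \<Rightarrow> nat \<Rightarrow> nat \<Rightarrow> nat \<Rightarrow> complex" where
  "rsol q d i n = (if n < d then (if n = i then 1 else 0)
                   else - (\<Sum>k<d. q k * rsol q d i (n - d + k)) / q d)"
  by auto
termination by (relation "Wellfounded.measure (\<lambda>(q,d,i,n). n)") auto

declare rsol.simps[simp del]

lemma rsol_rep:
  assumes qd: "q d \<noteq> 0" and rec: "\<And>n. (\<Sum>k\<le>d. q k * f (n+k)) = 0"
  shows "f n = (\<Sum>i<d. f i * rsol q d i n)"
proof (induction n rule: less_induct)
  case (less n)
  show ?case
  proof (cases "n < d")
    case True
    have "(\<Sum>i<d. f i * rsol q d i n) = (\<Sum>i<d. if i = n then f n else 0)"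
      by (rule sum.cong) (use True in \<open>auto simp: rsol.simps\<close>)
    also have "\<dots> = f n" using True by simp
    finally show ?thesis by simp
  next
    case False
    define m where "m = n - d"
    have n: "n = m + d" using False m_def by simp
    have "(\<Sum>k\<le>d. q k * f (m+k)) = 0" by (rule rec)
    hence "q d * f n + (\<Sum>k<d. q k * f (m+k)) = 0" by (simp add: lessThan_Suc_atMost[symmetric] n add.commute)
    hence fn: "f n = - (\<Sum>k<d. q k * f (m+k)) / q d" using qd by (simp add: field_simps add_eq_0_iff)
    have "(\<Sum>k<d. q k * f (m+k)) = (\<Sum>k<d. q k * (\<Sum>i<d. f i * rsol q d i (m+k)))"
    proof (rule sum.cong)
      fix k assume "k \<in> {..<d}"
      hence "m + k < n" using n by simp
      thus "q k * f (m+k) = q k * (\<Sum>i<d. f i * rsol q d i (m+k))" using less.IH by simp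
    qed simp
    also have "\<dots> = (\<Sum>i<d. f i * (\<Sum>k<d. q k * rsol q d i (m+k)))"
      unfolding sum_distrib_left by (subst sum.swap) (simp add: ac_simps)
    finally have "f n = - (\<Sum>i<d. f i * (\<Sum>k<d. q k * rsol q d i (m+k))) / q d" unfolding fn by simp
    also have "\<dots> = (\<Sum>i<d. - (f i * (\<Sum>k<d. q k * rsol q d i (m+k))) / q d)"
      by (simp add: sum_divide_distrib sum_negf)
    also have "\<dots> = (\<Sum>i<d. f i * (- (\<Sum>k<d. q k * rsol q d i (m+k)) / q d))"
      by (rule sum.cong) auto
    also have "\<dots> = (\<Sum>i<d. f i * rsol q d i n)"
    proof (rule sum.cong)
      fix i
      have "rsol q d i n = - (\<Sum>k<d. q k * rsol q d i (n - d + k)) / q d"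
        using False by (subst rsol.simps) simp
      also have "\<dots> = - (\<Sum>k<d. q k * rsol q d i (m + k)) / q d" using m_def by simp
      finally show "f i * (- (\<Sum>k<d. q k * rsol q d i (m+k)) / q d) = f i * rsol q d i n" by simp
    qed simp
    finally show ?thesis .
  qed
qed

lemma findim_kernel:
  assumes ex: "\<exists>j\<le>Dg. qc j \<noteq> 0"
  shows "findim_seq {f. \<forall>n. (\<Sum>j\<le>Dg. qc j * f (n+j)) = 0}"
proof -
  define S where "S = {j. j \<le> Dg \<and> qc j \<noteq> 0}"
  define d where "d = Max S"
  have fin: "finite S" unfolding S_def by auto
  have ne: "S \<noteq> {}" using ex unfolding S_def by auto
  have dS: "d \<in> S" unfolding d_def using Max_in[OF fin ne] .
  hence qd: "qc d \<noteq> 0" and dD: "d \<le> Dg" unfolding S_def by auto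
  have big: "qc j = 0" if "j \<le> Dg" "j > d" for j
    using Max_ge[OF fin, of j] that unfolding S_def d_def by fastforce
  show ?thesis unfolding findim_seq_def
  proof (intro exI conjI)
    show "finite (rsol qc d ` {..<d})" by simp
    show "{f. \<forall>n. (\<Sum>j\<le>Dg. qc j * f (n+j)) = 0} \<subseteq> clinhull (rsol qc d ` {..<d})"
    proof
      fix f assume "f \<in> {f. \<forall>n. (\<Sum>j\<le>Dg. qc j * f (n+j)) = 0}"
      hence r: "(\<Sum>j\<le>Dg. qc j * f (n+j)) = 0" for n by auto
      have "(\<Sum>j\<le>d. qc j * f (n+j)) = (\<Sum>j\<le>Dg. qc j * f (n+j))" for n
        by (rule sum.mono_neutral_left) (use dD big in auto)
      hence r2: "(\<Sum>j\<le>d. qc j * f (n+j)) = 0" for n using r by simp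
      have "f = (\<lambda>n. \<Sum>i<d. f i * rsol qc d i n)"
        by (rule ext) (rule rsol_rep[OF qd r2])
      thus "f \<in> clinhull (rsol qc d ` {..<d})" unfolding clinhull_def by blast
    qed
  qed
qed

lemma poly_bound: fixes p :: "complex poly" assumes "degree p \<le> M" shows "poly p x = (\<Sum>i\<le>M. coeff p i * x ^ i)"
  unfolding poly_altdef by (rule sum.mono_neutral_left) (use assms in \<open>auto simp: coeff_eq_0\<close>)

lemma pderiv_sum: fixes p :: "complex poly" shows "x * poly (pderiv p) x = (\<Sum>j\<le>degree p. of_nat j * coeff p j * x ^ j)"
proof -
  define g where "g j = of_nat j * coeff p j * x ^ j" for j
  have "x * poly (pderiv p) x = x * (\<Sum>i\<le>degree p. coeff (pderiv p) i * x ^ i)"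
    by (subst poly_bound[of _ "degree p"]) (use degree_pderiv[of p] in auto)
  also have "\<dots> = (\<Sum>i\<le>degree p. g (Suc i))"
    unfolding g_def coeff_pderiv by (simp add: sum_distrib_left ac_simps)
  also have "\<dots> = (\<Sum>j\<le>Suc (degree p). g j)"
    by (subst sum.atMost_Suc_shift) (simp add: g_def)
  also have "\<dots> = (\<Sum>j\<le>degree p. g j)"
    by (simp add: g_def coeff_eq_0)
  finally show ?thesis unfolding g_def .
qed

lemma geo_l2:
  fixes \<alpha> :: complex assumes a: "cmod \<alpha> < 1"
  shows "(\<lambda>n. \<alpha> ^ n) \<in> l2" "Nf (\<lambda>n. \<alpha> ^ n) \<in> l2"
proof -
  have r2: "norm ((cmod \<alpha>)\<^sup>2) < 1" using a by (simp add: power_less_one_iff abs_square_less_1)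
  show "(\<lambda>n. \<alpha> ^ n) \<in> l2" unfolding l2_def mem_Collect_eq
  proof -
    have "(cmod (\<alpha>^n))\<^sup>2 = ((cmod \<alpha>)\<^sup>2)^n" for n
      by (simp add: norm_power power_mult[symmetric] mult.commute)
    thus "summable (\<lambda>n. (cmod ((\<lambda>n. \<alpha> ^ n) n))\<^sup>2)" using summable_geometric[OF r2] by simp
  qed
  define s where "s = sqrt (cmod \<alpha>)"
  have s0: "s \<ge> 0" and s1: "s < 1" using a unfolding s_def by auto
  have ss: "s * s = cmod \<alpha>" unfolding s_def by simp
  have "(\<lambda>n. of_nat n * s ^ n) \<longlonglongrightarrow> (0::real)"
    by (rule powser_times_n_limit_0) (use s0 s1 in auto)
  hence "eventually (\<lambda>n. of_nat n * s ^ n < 1) sequentially"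
    by (intro order_tendstoD) auto
  then obtain M where M: "\<And>n. n \<ge> M \<Longrightarrow> real n * s ^ n < 1" by (auto simp: eventually_at_top_linorder)
  have sg: "summable (\<lambda>n. (cmod \<alpha>) ^ n)" using a by (intro summable_geometric) simp
  show "Nf (\<lambda>n. \<alpha> ^ n) \<in> l2" unfolding l2_def Nf_def
  proof (simp, rule summable_comparison_test'[OF sg, of M])
    fix n assume "n \<ge> M"
    have e: "(cmod (of_nat n * \<alpha> ^ n))\<^sup>2 = (real n * s ^ n)\<^sup>2 * (cmod \<alpha>) ^ n"
      by (simp add: norm_mult norm_power power_mult_distrib ss[symmetric] power2_eq_square)
    have "(real n * s ^ n)\<^sup>2 \<le> 1" using M[OF \<open>n \<ge> M\<close>] s0
      by (simp add: power_le_one abs_le_square_iff)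
    hence "(real n * s ^ n)\<^sup>2 * (cmod \<alpha>) ^ n \<le> 1 * (cmod \<alpha>) ^ n"
      by (rule mult_right_mono) simp
    thus "norm ((cmod (of_nat n * \<alpha> ^ n))\<^sup>2) \<le> (cmod \<alpha>) ^ n" using e by simp
  qed
qed

lemma sp_e: "sp (coeff p) (degree p) (\<lambda>n. \<alpha> ^ n) = (\<lambda>n. poly p \<alpha> * \<alpha> ^ n)"
  unfolding sp_def poly_altdef by (simp add: power_add sum_distrib_left ac_simps)

lemma sp_Ne: "sp (coeff p) (degree p) (Nf (\<lambda>n. \<alpha> ^ n))
   = (\<lambda>n. poly p \<alpha> * Nf (\<lambda>n. \<alpha> ^ n) n + \<alpha> * poly (pderiv p) \<alpha> * \<alpha> ^ n)"
  unfolding pderiv_sum unfolding sp_def poly_altdef Nf_def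
  by (simp add: power_add sum_distrib_left sum_distrib_right sum.distrib algebra_simps)

lemma Tf_scale: "Tf p (\<lambda>n. x * f n) = (\<lambda>n. x * Tf p f n)"
  by (simp add: Tf_def sp_def sum_distrib_left algebra_simps)

lemma Tpow_e: "(Tf p ^^ k) (\<lambda>n. \<alpha> ^ n) = (\<lambda>n. (1 - poly p \<alpha>) ^ k * \<alpha> ^ n)"
proof (induction k)
  case 0 thus ?case by simp
next
  case (Suc k)
  have "(Tf p ^^ Suc k) (\<lambda>n. \<alpha> ^ n) = Tf p (\<lambda>n. (1 - poly p \<alpha>) ^ k * \<alpha> ^ n + 0)" using Suc by simp
  also have "\<dots> = (\<lambda>n. (1 - poly p \<alpha>) ^ k * Tf p (\<lambda>n. \<alpha> ^ n) n + Tf p (\<lambda>n. 0) n)" by (rule Tf_lin)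
  also have "\<dots> = (\<lambda>n. (1 - poly p \<alpha>) ^ Suc k * \<alpha> ^ n)"
    unfolding Tf_def sp_e by (auto simp: sp_def algebra_simps)
  finally show ?case .
qed

lemma Tpow_Ne: "(Tf p ^^ k) (Nf (\<lambda>n. \<alpha> ^ n)) = (\<lambda>n. (1 - poly p \<alpha>) ^ k * Nf (\<lambda>n. \<alpha> ^ n) n
     - of_nat k * (1 - poly p \<alpha>) ^ (k - 1) * (\<alpha> * poly (pderiv p) \<alpha>) * \<alpha> ^ n)"
proof (induction k)
  case 0 thus ?case by simp
next
  case (Suc k)
  define w where "w = 1 - poly p \<alpha>"
  define \<beta> where "\<beta> = \<alpha> * poly (pderiv p) \<alpha>"
  have T1: "Tf p (Nf (\<lambda>n. \<alpha> ^ n)) = (\<lambda>n. w * Nf (\<lambda>n. \<alpha> ^ n) n - \<beta> * \<alpha> ^ n)"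
    unfolding Tf_def sp_Ne w_def \<beta>_def by (auto simp: algebra_simps)
  have T0: "Tf p (\<lambda>n. \<alpha> ^ n) = (\<lambda>n. w * \<alpha> ^ n)"
    using Tpow_e[where k=1 and p=p and \<alpha>=\<alpha>] unfolding w_def by simp
  have "(Tf p ^^ Suc k) (Nf (\<lambda>n. \<alpha> ^ n)) = Tf p (\<lambda>n. w ^ k * Nf (\<lambda>n. \<alpha> ^ n) n + (- (of_nat k * w ^ (k - 1) * \<beta>)) * \<alpha> ^ n)"
    using Suc unfolding w_def \<beta>_def by (simp add: algebra_simps)
  also have "\<dots> = (\<lambda>n. w ^ k * Tf p (Nf (\<lambda>n. \<alpha> ^ n)) n + (- (of_nat k * w ^ (k - 1) * \<beta>)) * Tf p (\<lambda>n. \<alpha> ^ n) n)"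
    by (simp only: Tf_lin Tf_scale)
  also have "\<dots> = (\<lambda>n. w ^ Suc k * Nf (\<lambda>n. \<alpha> ^ n) n - of_nat (Suc k) * w ^ (Suc k - 1) * \<beta> * \<alpha> ^ n)"
  proof (cases k)
    case 0 thus ?thesis unfolding T1 T0 by (auto simp: algebra_simps)
  next
    case (Suc k')
    thus ?thesis unfolding T1 T0 by (auto simp: algebra_simps)
  qed
  finally show ?case unfolding w_def \<beta>_def .
qed

definition G :: "complex poly \<Rightarrow> complex \<Rightarrow> seq set" where
  "G p c = {\<phi>. \<phi> \<in> l2 \<and> Nf \<phi> \<in> l2 \<and> (\<exists>x y. l2_conv (log_psum (polyL p) \<phi>) x \<and>
      l2_conv (log_psum (polyL p) (Nf \<phi>)) y \<and> Nf x \<in> l2 \<and> (\<forall>n. of_nat n * x n - y n = - c * \<phi> n))}"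

lemma log_psum_lin: "log_psum (polyL p) (\<lambda>n. a * f n + g n) K
   = (\<lambda>n. a * log_psum (polyL p) f K n + log_psum (polyL p) g K n)"
  unfolding log_psum_eq Tf_pow_lin by (auto simp: algebra_simps sum.distrib sum_distrib_left)

lemma Nf_lin: "Nf (\<lambda>n. a * f n + g n) = (\<lambda>n. a * Nf f n + Nf g n)"
  unfolding Nf_def by (auto simp: algebra_simps)

lemma G_zero: "(\<lambda>n. 0) \<in> G p c"
proof -
  have lz: "log_psum (polyL p) (\<lambda>n. 0) = (\<lambda>K n. 0 * 0)"
    unfolding log_psum_eq Tf_pow_zero by simp
  have cz: "l2_conv (\<lambda>K n. 0 * 0) (\<lambda>n. 0 * 0)" using l2_conv_scal[OF l2_zero, of "\<lambda>K. 0" 0] by simp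
  have nz: "Nf (\<lambda>n. 0) = (\<lambda>n. 0)" unfolding Nf_def by simp
  have c1: "l2_conv (log_psum (polyL p) (\<lambda>n. 0)) (\<lambda>n. 0)" using lz cz by simp
  show ?thesis unfolding G_def mem_Collect_eq nz
    by (intro conjI exI[of _ "\<lambda>n. 0"] l2_zero c1) (auto simp: nz l2_zero)
qed

lemma G_lin: assumes "\<phi> \<in> G p c" "\<psi> \<in> G p c" shows "(\<lambda>n. a * \<phi> n + \<psi> n) \<in> G p c"
proof -
  obtain x y where x: "l2_conv (log_psum (polyL p) \<phi>) x" and y: "l2_conv (log_psum (polyL p) (Nf \<phi>)) y"
    and nx: "Nf x \<in> l2" and r: "\<And>n. of_nat n * x n - y n = - c * \<phi> n" and l: "\<phi> \<in> l2" "Nf \<phi> \<in> l2"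
    using assms(1) unfolding G_def by blast
  obtain x' y' where x': "l2_conv (log_psum (polyL p) \<psi>) x'" and y': "l2_conv (log_psum (polyL p) (Nf \<psi>)) y'"
    and nx': "Nf x' \<in> l2" and r': "\<And>n. of_nat n * x' n - y' n = - c * \<psi> n" and l': "\<psi> \<in> l2" "Nf \<psi> \<in> l2"
    using assms(2) unfolding G_def by blast
  have 1: "l2_conv (log_psum (polyL p) (\<lambda>n. a * \<phi> n + \<psi> n)) (\<lambda>n. a * x n + x' n)"
    unfolding log_psum_lin by (rule l2_conv_lin[OF x x'])
  have 2: "l2_conv (log_psum (polyL p) (Nf (\<lambda>n. a * \<phi> n + \<psi> n))) (\<lambda>n. a * y n + y' n)"
    unfolding Nf_lin log_psum_lin by (rule l2_conv_lin[OF y y'])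
  have 3: "Nf (\<lambda>n. a * x n + x' n) \<in> l2" unfolding Nf_lin by (rule l2_lin[OF nx nx'])
  have 4: "of_nat n * (a * x n + x' n) - (a * y n + y' n) = - c * (a * \<phi> n + \<psi> n)" for n
  proof -
    have "of_nat n * (a * x n + x' n) - (a * y n + y' n) = a * (of_nat n * x n - y n) + (of_nat n * x' n - y' n)"
      by (simp add: algebra_simps)
    also have "\<dots> = a * (- c * \<phi> n) + (- c * \<psi> n)" unfolding r r' ..
    finally show ?thesis by (simp add: algebra_simps)
  qed
  have 5: "(\<lambda>n. a * \<phi> n + \<psi> n) \<in> l2" "Nf (\<lambda>n. a * \<phi> n + \<psi> n) \<in> l2"
    using l l' unfolding Nf_lin by (auto intro: l2_lin)
  show ?thesis unfolding G_def using 1 2 3 4 5 by blast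
qed

lemma e_in_G:
  fixes \<alpha> :: complex
  assumes a: "cmod \<alpha> < 1" and w: "cmod (poly p \<alpha> - 1) < 1" and eq: "\<alpha> * poly (pderiv p) \<alpha> + c * poly p \<alpha> = 0"
  shows "(\<lambda>n. \<alpha> ^ n) \<in> G p c"
proof -
  define w where "w = 1 - poly p \<alpha>"
  define \<beta> where "\<beta> = \<alpha> * poly (pderiv p) \<alpha>"
  define e where "e = (\<lambda>n::nat. \<alpha> ^ n)"
  have wl: "norm w < 1" using w unfolding w_def by (simp add: norm_minus_commute)
  have p0: "poly p \<alpha> \<noteq> 0" using w by auto
  have el: "e \<in> l2" "Nf e \<in> l2" using geo_l2[OF a] unfolding e_def by auto
  define s where "s K = (\<Sum>k=1..K. 1 / of_nat k * w ^ k)" for K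
  define g where "g K = (\<Sum>k<K. w ^ k)" for K
  have ls: "log_psum (polyL p) e K = (\<lambda>n. s K * e n)" for K
    unfolding log_psum_eq e_def Tpow_e s_def w_def by (auto simp: sum_distrib_left ac_simps)
  have lNs0: "log_psum (polyL p) (Nf e) K n = s K * Nf e n - g K * \<beta> * e n" for K n
  proof -
    have "log_psum (polyL p) (Nf e) K n = (\<Sum>k<K. 1 / of_nat (Suc k) * w ^ Suc k * Nf e n - w ^ k * \<beta> * e n)"
      unfolding log_psum_eq e_def Tpow_Ne sum_1K
      by (rule sum.cong) (simp_all add: w_def \<beta>_def right_diff_distrib del: of_nat_Suc)
    also have "\<dots> = (\<Sum>k<K. 1 / of_nat (Suc k) * w ^ Suc k) * Nf e n - (\<Sum>k<K. w ^ k) * \<beta> * e n"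
      by (simp only: sum_subtractf sum_distrib_right)
    finally show ?thesis unfolding s_def g_def sum_1K .
  qed
  have lNs: "log_psum (polyL p) (Nf e) K = (\<lambda>n. 1 * (s K * Nf e n) + (- \<beta> * g K) * e n)" for K
  proof -
    have "log_psum (polyL p) (Nf e) K = (\<lambda>n. s K * Nf e n - g K * \<beta> * e n)" by (rule ext) (rule lNs0)
    thus ?thesis by (auto simp: algebra_simps)
  qed
  have sum1: "summable (\<lambda>k. 1 / of_nat (Suc k) * w ^ Suc k)"
  proof (rule summable_comparison_test'[where N=0])
    show "summable (\<lambda>k. norm w * norm w ^ k)" using wl by (intro summable_mult summable_geometric) simp
    fix k :: nat
    have "norm (1 / of_nat (Suc k) * w ^ Suc k) = norm w ^ Suc k / real (Suc k)"
      by (simp add: norm_mult norm_power norm_divide del: of_nat_Suc)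
    also have "\<dots> \<le> norm w ^ Suc k" by (rule mult_imp_div_pos_le) (use mult_left_mono[of 1 "real (Suc k)" "norm w ^ Suc k"] in \<open>simp_all del: of_nat_Suc\<close>)
    finally show "norm (1 / of_nat (Suc k) * w ^ Suc k) \<le> norm w * norm w ^ k" by simp
  qed
  define L where "L = suminf (\<lambda>k. 1 / of_nat (Suc k) * w ^ Suc k)"
  have sL: "s \<longlonglongrightarrow> L" unfolding s_def sum_1K L_def by (rule summable_LIMSEQ[OF sum1])
  have gL: "g \<longlonglongrightarrow> 1 / poly p \<alpha>"
    using geometric_sums[OF wl] unfolding sums_def g_def w_def by simp
  have gL': "(\<lambda>K. - \<beta> * g K) \<longlonglongrightarrow> - \<beta> * (1 / poly p \<alpha>)" by (intro tendsto_intros gL)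
  have cx: "l2_conv (log_psum (polyL p) e) (\<lambda>n. L * e n)"
    unfolding ls by (rule l2_conv_scal[OF el(1) sL])
  have cy: "l2_conv (log_psum (polyL p) (Nf e)) (\<lambda>n. 1 * (L * Nf e n) + (- \<beta> * (1 / poly p \<alpha>)) * e n)"
    unfolding lNs by (rule l2_conv_lin[OF l2_conv_scal[OF el(2) sL] l2_conv_scal[OF el(1) gL']])
  have nx: "Nf (\<lambda>n. L * e n) \<in> l2" using l2_scale[OF el(2), of L] by (simp add: Nf_def ac_simps)
  have b: "\<beta> = - c * poly p \<alpha>" using eq unfolding \<beta>_def by (simp add: eq_neg_iff_add_eq_0)
  have r: "of_nat n * (L * e n) - (1 * (L * Nf e n) + (- \<beta> * (1 / poly p \<alpha>)) * e n) = - c * e n" for n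
    using p0 unfolding b Nf_def by (simp add: algebra_simps)
  show ?thesis unfolding e_def[symmetric] G_def using el cx cy nx r by blast
qed

lemma dom_opow_polyL: "dom (opow (polyL p) k) = l2"
  using dom_opow[of "polyL p" k] dom_polyL app_polyL sp_l2 by auto

lemma dom_log: "dom (log_op (polyL p)) = {f \<in> l2. \<exists>x. l2_conv (log_psum (polyL p) f) x}"
  unfolding dom_def[of "log_op _"] log_op_def using dom_opow_polyL[of p] by (auto simp: dom_def)

lemma app_log: "l2_conv (log_psum (polyL p) f) x \<Longrightarrow> app (log_op (polyL p)) f = (\<lambda>n. - x n)"
  by (simp add: app_def log_op_def l2_conv_THE)

lemma gen_in_G:
  assumes w: "cmod (poly p \<alpha> - 1) < 1" and eq: "\<alpha> * poly (pderiv p) \<alpha> + c * poly p \<alpha> = 0"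
    and k: "\<phi> \<in> kerL \<alpha>"
  shows "\<phi> \<in> G p c"
proof -
  have k': "\<phi> \<in> l2 \<and> (\<lambda>n. \<phi> (Suc n) - \<alpha> * \<phi> n) = (\<lambda>n. 0)"
    using k unfolding kerL_def dom_def L_op_def app_def by simp
  hence l: "\<phi> \<in> l2" by blast
  have r: "\<phi> (Suc n) - \<alpha> * \<phi> n = 0" for n using fun_cong[OF conjunct2[OF k'], of n] by simp
  obtain c0 where c0: "c0 = \<phi> 0" by simp
  have ph: "\<phi> n = c0 * \<alpha> ^ n" for n
  proof (induction n)
    case 0 thus ?case using c0 by simp
  next
    case (Suc n) thus ?case using r[of n] by (simp add: algebra_simps)
  qed
  show ?thesis
  proof (cases "c0 = 0")
    case True
    hence "\<phi> = (\<lambda>n. 0)" using ph by auto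
    thus ?thesis using G_zero by simp
  next
    case False
    have a: "cmod \<alpha> < 1"
    proof (rule ccontr)
      assume "\<not> cmod \<alpha> < 1"
      hence a1: "cmod \<alpha> \<ge> 1" by simp
      have "summable (\<lambda>n. (cmod (\<phi> n))\<^sup>2)" using l unfolding l2_def by simp
      hence t: "(\<lambda>n. (cmod (\<phi> n))\<^sup>2) \<longlonglongrightarrow> 0" by (rule summable_LIMSEQ_zero)
      have "(cmod (c0))\<^sup>2 > 0" using False by simp
      from order_tendstoD(2)[OF t this]
      have "eventually (\<lambda>n. (cmod (\<phi> n))\<^sup>2 < (cmod (c0))\<^sup>2) sequentially" .
      then obtain n where n: "(cmod (\<phi> n))\<^sup>2 < (cmod (c0))\<^sup>2" by (auto dest: eventually_happens)
      have "1 \<le> cmod \<alpha> ^ n" by (rule one_le_power[OF a1])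
      hence "cmod (c0) * 1 \<le> cmod (c0) * cmod \<alpha> ^ n" by (rule mult_left_mono) simp
      hence "cmod (c0) \<le> cmod (c0) * cmod \<alpha> ^ n" by simp
      also have "\<dots> = cmod (\<phi> n)" unfolding ph[of n] by (simp add: norm_mult norm_power)
      finally have "cmod c0 \<le> cmod (\<phi> n)" .
      hence "(cmod (c0))\<^sup>2 \<le> (cmod (\<phi> n))\<^sup>2" by (rule power_mono) simp
      thus False using n by linarith
    qed
    have "(\<lambda>n. c0 * \<alpha> ^ n + 0) \<in> G p c" by (rule G_lin[OF e_in_G[OF a w eq] G_zero])
    moreover have "\<phi> = (\<lambda>n. c0 * \<alpha> ^ n + 0)" using ph by auto
    ultimately show ?thesis by simp
  qed
qed

lemma hull_in_G:
  fixes m :: nat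
  assumes "\<forall>i<m. v i \<in> S" "S \<subseteq> G p c"
  shows "(\<lambda>n. \<Sum>i<m. a i * v i n) \<in> G p c"
  using assms(1)
proof (induction m)
  case 0 thus ?case using G_zero by simp
next
  case (Suc m)
  have "(\<lambda>n. a m * v m n + (\<Sum>i<m. a i * v i n)) \<in> G p c"
    using Suc assms(2) by (intro G_lin) auto
  thus ?case by (simp add: add.commute)
qed

lemma Dpc_G: "Dpc p c \<subseteq> G p c"
proof -
  have S: "{\<phi> \<in> dom N_op. \<exists>\<alpha>. cmod (poly p \<alpha> - 1) < 1 \<and>
       \<alpha> * poly (pderiv p) \<alpha> + c * poly p \<alpha> = 0 \<and> \<phi> \<in> kerL \<alpha>} \<subseteq> G p c" (is "?S \<subseteq> _")
    using gen_in_G by blast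
  show ?thesis
  proof
    fix f assume "f \<in> Dpc p c"
    then obtain m :: nat and a :: "nat \<Rightarrow> complex" and v where "\<forall>i<m. v i \<in> {\<phi> \<in> dom N_op. \<exists>\<alpha>. cmod (poly p \<alpha> - 1) < 1 \<and>
       \<alpha> * poly (pderiv p) \<alpha> + c * poly p \<alpha> = 0 \<and> \<phi> \<in> kerL \<alpha>}" and f: "f = (\<lambda>n. \<Sum>i<m. a i * v i n)"
      unfolding Dpc_def clinhull_def by auto
    from hull_in_G[OF this(1) S] show "f \<in> G p c" unfolding f .
  qed
qed

lemma G_comm:
  assumes \<phi>: "\<phi> \<in> G p c" and c: "c \<noteq> 0"
  defines "A \<equiv> scale_op (- \<i> / c) (log_op (polyL p))"
  shows "\<phi> \<in> dom (comp N_op A) \<inter> dom (comp A N_op) \<and>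
    (\<lambda>n. app (comp N_op A) \<phi> n - app (comp A N_op) \<phi> n) = (\<lambda>n. - \<i> * \<phi> n)"
proof -
  obtain x y where x: "l2_conv (log_psum (polyL p) \<phi>) x" and y: "l2_conv (log_psum (polyL p) (Nf \<phi>)) y"
    and nx: "Nf x \<in> l2" and r: "\<And>n. of_nat n * x n - y n = - c * \<phi> n" and l: "\<phi> \<in> l2" "Nf \<phi> \<in> l2"
    using \<phi> unfolding G_def by blast
  have xl: "x \<in> l2" using x unfolding l2_conv_def by blast
  have a1: "app A \<phi> = (\<lambda>n. (- \<i> / c) * - x n)" unfolding A_def app_scale app_log[OF x] ..
  have a2: "app A (Nf \<phi>) = (\<lambda>n. (- \<i> / c) * - y n)" unfolding A_def app_scale app_log[OF y] ..
  have d1: "\<phi> \<in> dom A" "Nf \<phi> \<in> dom A" unfolding A_def dom_scale dom_log using x y l by auto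
  have "(\<lambda>n. (- \<i> / c) * - x n) \<in> l2" using l2_scale[OF xl, of "\<i> / c"] by simp
  moreover have "Nf (\<lambda>n. (- \<i> / c) * - x n) \<in> l2" using l2_scale[OF nx, of "\<i> / c"] by (simp add: Nf_def ac_simps)
  ultimately have d2: "app A \<phi> \<in> dom N_op" unfolding a1 dom_N by simp
  have d3: "\<phi> \<in> dom N_op" unfolding dom_N using l by simp
  have eq: "app (comp N_op A) \<phi> n - app (comp A N_op) \<phi> n = - \<i> * \<phi> n" for n
  proof -
    have "app (comp N_op A) \<phi> n - app (comp A N_op) \<phi> n = (\<i> / c) * (of_nat n * x n - y n)"
      unfolding app_comp app_N a1 a2 by (simp add: Nf_def algebra_simps)
    also have "\<dots> = - \<i> * \<phi> n" unfolding r using c by simp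
    finally show ?thesis .
  qed
  show ?thesis using d1 d2 d3 eq unfolding dom_comp app_N by auto
qed

lemma not_monom_ex:
  fixes p :: "complex poly"
  assumes nm: "\<nexists>b m. p = monom b m"
  shows "\<exists>j\<le>degree p. (of_nat j + c) * coeff p j \<noteq> 0"
proof (rule ccontr)
  assume "\<not> ?thesis"
  hence z: "\<And>j. j \<le> degree p \<Longrightarrow> (of_nat j + c) * coeff p j = 0" by auto
  have "p = monom (coeff p (degree p)) (degree p)"
  proof (rule poly_eqI)
    fix j
    show "coeff p j = coeff (monom (coeff p (degree p)) (degree p)) j"
    proof (cases "j = degree p")
      case True thus ?thesis by (simp add: coeff_monom)
    next
      case False
      show ?thesis
      proof (cases "j < degree p")
        case False': False
        thus ?thesis using \<open>j \<noteq> degree p\<close> by (simp add: coeff_monom coeff_eq_0)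
      next
        case True
        show ?thesis
        proof (rule ccontr)
          assume ne: "\<not> ?thesis"
          hence cj: "coeff p j \<noteq> 0" using False by (simp add: coeff_monom)
          hence "of_nat j + c = 0" using z[of j] True by simp
          have "p \<noteq> 0" using cj by auto
          hence cd: "coeff p (degree p) \<noteq> 0" by simp
          hence "of_nat (degree p) + c = 0" using z[of "degree p"] by simp
          with \<open>of_nat j + c = 0\<close> have "(of_nat j :: complex) = of_nat (degree p)" by (metis add_right_cancel)
          hence "j = degree p" by (simp only: of_nat_eq_iff)
          thus False using True by simp
        qed
      qed
    qed
  qed
  thus False using nm by blast
qed

theorem mainTheorem8:
  fixes p :: "complex poly" and c :: complex
  assumes "c \<noteq> 0"
  shows "((\<exists>\<alpha>. cmod \<alpha> < 1 \<and> \<alpha> * poly (pderiv p) \<alpha> + c * poly p \<alpha> = 0 \<and>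
              cmod (poly p \<alpha> - 1) < 1) \<longrightarrow>
           Dpc p c \<noteq> {(\<lambda>n. 0)} \<and>
           comm_on N_op (scale_op (- \<i> / c) (log_op (polyL p))) (\<lambda>\<phi> n. - \<i> * \<phi> n) (Dpc p c))
       \<and> ((\<nexists>b m. p = monom b m) \<longrightarrow>
           (\<forall>D. csubspace_seq D \<and>
                D \<subseteq> Eset p \<inter> dom (comp N_op (log_op (polyL p))) \<inter> dom (comp (log_op (polyL p)) N_op) \<and>
                (\<forall>\<phi>\<in>D. (\<lambda>n. app (comp N_op (log_op (polyL p))) \<phi> n
                           - app (comp (log_op (polyL p)) N_op) \<phi> n) = (\<lambda>n. c * \<phi> n))
              \<longrightarrow> findim_seq D))"
proof (intro conjI impI allI)
  assume "\<exists>\<alpha>. cmod \<alpha> < 1 \<and> \<alpha> * poly (pderiv p) \<alpha> + c * poly p \<alpha> = 0 \<and> cmod (poly p \<alpha> - 1) < 1"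
  then obtain \<alpha> where a: "cmod \<alpha> < 1" and eq: "\<alpha> * poly (pderiv p) \<alpha> + c * poly p \<alpha> = 0"
    and w: "cmod (poly p \<alpha> - 1) < 1" by blast
  define e where "e = (\<lambda>n::nat. \<alpha> ^ n)"
  have el: "e \<in> l2" "Nf e \<in> l2" using geo_l2[OF a] unfolding e_def by auto
  have ek: "e \<in> kerL \<alpha>" unfolding kerL_def dom_def L_op_def app_def e_def using el(1) by (auto simp: e_def)
  have eN: "e \<in> dom N_op" unfolding dom_N using el by simp
  have "(\<lambda>n. \<Sum>i<(1::nat). (\<lambda>_. 1::complex) i * (\<lambda>_. e) i n) \<in> Dpc p c"
    unfolding Dpc_def clinhull_def
    by (rule CollectI, rule exI[of _ 1], rule exI[of _ "\<lambda>_. 1"], rule exI[of _ "\<lambda>_. e"]) (use ek eN eq w in auto)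
  hence eD: "e \<in> Dpc p c" by simp
  have "e \<noteq> (\<lambda>n. 0)"
  proof
    assume "e = (\<lambda>n. 0)"
    hence "e 0 = 0" by simp
    thus False unfolding e_def by simp
  qed
  thus "Dpc p c \<noteq> {(\<lambda>n. 0)}" using eD by blast
  show "comm_on N_op (scale_op (- \<i> / c) (log_op (polyL p))) (\<lambda>\<phi> n. - \<i> * \<phi> n) (Dpc p c)"
    unfolding comm_on_def using G_comm[OF _ assms] Dpc_G by blast
next
  fix D
  assume nm: "\<nexists>b m. p = monom b m"
  assume H: "csubspace_seq D \<and>
                D \<subseteq> Eset p \<inter> dom (comp N_op (log_op (polyL p))) \<inter> dom (comp (log_op (polyL p)) N_op) \<and>
                (\<forall>\<phi>\<in>D. (\<lambda>n. app (comp N_op (log_op (polyL p))) \<phi> n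
                           - app (comp (log_op (polyL p)) N_op) \<phi> n) = (\<lambda>n. c * \<phi> n))"
  have sub: "D \<subseteq> {f. \<forall>n. (\<Sum>j\<le>degree p. ((of_nat j + c) * coeff p j) * f (n+j)) = 0}"
  proof
    fix \<phi> assume \<phi>: "\<phi> \<in> D"
    have d1: "\<phi> \<in> dom (comp N_op (log_op (polyL p)))" and d2: "\<phi> \<in> dom (comp (log_op (polyL p)) N_op)"
      using H \<phi> by auto
    have R: "(\<lambda>n. app (comp N_op (log_op (polyL p))) \<phi> n - app (comp (log_op (polyL p)) N_op) \<phi> n) = (\<lambda>n. c * \<phi> n)"
      using H \<phi> by auto
    from d1 obtain x where x: "l2_conv (log_psum (polyL p) \<phi>) x"
      unfolding dom_comp dom_log by auto
    from d2 have "app N_op \<phi> \<in> dom (log_op (polyL p))" unfolding dom_comp by auto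
    then obtain y where y: "l2_conv (log_psum (polyL p) (Nf \<phi>)) y"
      unfolding app_N dom_log by auto
    have r: "of_nat n * x n - y n = - c * \<phi> n" for n
    proof -
      have "app (comp N_op (log_op (polyL p))) \<phi> n - app (comp (log_op (polyL p)) N_op) \<phi> n = c * \<phi> n"
        using fun_cong[OF R, of n] by simp
      thus ?thesis unfolding app_comp app_N unfolding app_log[OF x] app_log[OF y] unfolding Nf_def
        by (simp add: algebra_simps)
    qed
    show "\<phi> \<in> {f. \<forall>n. (\<Sum>j\<le>degree p. ((of_nat j + c) * coeff p j) * f (n+j)) = 0}"
      using rel_kernel[OF x y r] by simp
  qed
  from findim_kernel[OF not_monom_ex[OF nm]]
  obtain B where "finite B" "{f. \<forall>n. (\<Sum>j\<le>degree p. ((of_nat j + c) * coeff p j) * f (n+j)) = 0} \<subseteq> clinhull B"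
    unfolding findim_seq_def by blast
  thus "findim_seq D" unfolding findim_seq_def using sub by blast
qed

end
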